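(* Both patterns $[12]$ and $[21]$ in $S_2$ admit bountiful width systems.
   Context: For $x=[x_1,\dots,x_N]\in S_N$ and a pattern $\sigma\in S_k$, an instance of $\sigma$ in $x$ is a tuple of positions $P=(P_1<\dots<P_k)$ with $(x_{P_1},\dots,x_{P_k})$ in the same relative order as $(\sigma(1),\dots,\sigma(k))$. A width system for $\sigma$ is a finite sequence of pairs $(a_1,b_1),\dots,(a_m,b_m)$ with $1\le a_l<b_l\le k$; it assigns to each instance $P$ the tuple $w(P)=(P_{b_1}-P_{a_1},\dots,P_{b_m}-P_{a_m})$. An instance $P$ is minimal in $x$ if $w(P)$ is lexicographically minimal among all instances of $\sigma$ in $x$; it is locally minimal if it is a minimal instance of $\sigma$ in the consecutive segment $[x_{P_1},x_{P_1+1},\dots,x_{P_k}]$. The width system is bountiful if for every $N$, every $x\in S_N$, every locally minimal instance $P$ of $\sigma$ in $x$ and every position $t$ with $P_1<t<P_k$, $t\notin\{P_1,\dots,P_k\}$, either $x_t<x_{P_j}$ for all $j$ with $P_j<t$, or $x_t>x_{P_j}$ for all $j$ with $P_j>t$. $\sigma$ admits a bountiful width system if some width system for $\sigma$ is bountiful. *)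

theory Defs
  imports Main
begin

text \<open>Conventions: a permutation x in S_N is the list [x_1,...,x_N] of its values,
  i.e. a list of length N whose set of entries is {1..N}.  Positions are 0-based list
  indices (only differences of positions enter the widths, so this is harmless).\<close>

definition is_perm :: "nat \<Rightarrow> nat list \<Rightarrow> bool" where
  "is_perm N x \<longleftrightarrow> length x = N \<and> set x = {1..N}"

definition is_instance :: "nat list \<Rightarrow> nat list \<Rightarrow> nat list \<Rightarrow> bool" where
  "is_instance \<sigma> x P \<longleftrightarrow>
     length P = length \<sigma> \<and> sorted_wrt (<) P \<and> (\<forall>p\<in>set P. p < length x) \<and>
     (\<forall>i<length \<sigma>. \<forall>j<length \<sigma>. x ! (P ! i) < x ! (P ! j) \<longleftrightarrow> \<sigma> ! i < \<sigma> ! j)"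

definition is_width_system :: "nat \<Rightarrow> (nat \<times> nat) list \<Rightarrow> bool" where
  "is_width_system k ws \<longleftrightarrow> (\<forall>(a,b)\<in>set ws. a < b \<and> b < k)"

definition width :: "(nat \<times> nat) list \<Rightarrow> nat list \<Rightarrow> nat list" where
  "width ws P = map (\<lambda>(a,b). P ! b - P ! a) ws"

definition is_minimal_instance :: "nat list \<Rightarrow> (nat \<times> nat) list \<Rightarrow> nat list \<Rightarrow> nat list \<Rightarrow> bool" where
  "is_minimal_instance \<sigma> ws x P \<longleftrightarrow>
     is_instance \<sigma> x P \<and> (\<forall>Q. is_instance \<sigma> x Q \<longrightarrow> lexordp_eq (width ws P) (width ws Q))"

text \<open>The consecutive segment [x_{P_1}, ..., x_{P_k}] and P re-indexed within it.\<close>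
definition is_locally_minimal :: "nat list \<Rightarrow> (nat \<times> nat) list \<Rightarrow> nat list \<Rightarrow> nat list \<Rightarrow> bool" where
  "is_locally_minimal \<sigma> ws x P \<longleftrightarrow>
     is_instance \<sigma> x P \<and> P \<noteq> [] \<and>
     is_minimal_instance \<sigma> ws (take (last P - hd P + 1) (drop (hd P) x)) (map (\<lambda>p. p - hd P) P)"

definition bountiful :: "nat list \<Rightarrow> (nat \<times> nat) list \<Rightarrow> bool" where
  "bountiful \<sigma> ws \<longleftrightarrow>
     (\<forall>N x P t. is_perm N x \<longrightarrow> is_locally_minimal \<sigma> ws x P \<longrightarrow>
        hd P < t \<longrightarrow> t < last P \<longrightarrow> t \<notin> set P \<longrightarrow>
        (\<forall>j<length P. P ! j < t \<longrightarrow> x ! t < x ! (P ! j)) \<or>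
        (\<forall>j<length P. t < P ! j \<longrightarrow> x ! (P ! j) < x ! t))"

definition admits_bountiful_width_system :: "nat list \<Rightarrow> bool" where
  "admits_bountiful_width_system \<sigma> \<longleftrightarrow>
     (\<exists>ws. is_width_system (length \<sigma>) ws \<and> bountiful \<sigma> ws)"

end

theory Submission
  imports Defs
begin

lemma all2: "(\<forall>i<Suc (Suc 0). P i) \<longleftrightarrow> P 0 \<and> P (Suc 0)"
  by (metis less_Suc_eq less_Suc0 zero_less_Suc)

lemma inst2: "is_instance [a,b] x [p,q] \<longleftrightarrow> p < q \<and> q < length x \<and>
   (x!p < x!q \<longleftrightarrow> a < b) \<and> (x!q < x!p \<longleftrightarrow> b < a)"
  unfolding is_instance_def apply (simp add: all2) by auto

lemma inst_len: "is_instance [a,b] x P \<Longrightarrow> \<exists>p q. P = [p,q]"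
  unfolding is_instance_def
  by (cases P; simp; rename_tac u v; case_tac v; simp)

lemma key:
  assumes lm: "is_locally_minimal [a,b] [(0,1)] x [p,q]" and t: "p < t" "t < q"
  shows "\<not> ((x!p < x!t \<longleftrightarrow> a < b) \<and> (x!t < x!p \<longleftrightarrow> b < a))"
proof
  assume h: "(x!p < x!t \<longleftrightarrow> a < b) \<and> (x!t < x!p \<longleftrightarrow> b < a)"
  define y where "y = take (q - p + 1) (drop p x)"
  from lm have i: "is_instance [a,b] x [p,q]" and
    m: "is_minimal_instance [a,b] [(0,1)] y [0, q - p]"
    unfolding is_locally_minimal_def y_def by auto
  from i have ql: "q < length x" by (simp add: inst2)
  have ly: "length y = q - p + 1" using ql t unfolding y_def by auto
  have y0: "y!0 = x!p" using ql t unfolding y_def by auto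
  have yt: "y!(t-p) = x!t" using ql t unfolding y_def by auto
  have "is_instance [a,b] y [0, t-p]" unfolding inst2 using h t ly y0 yt by auto
  with m have "lexordp_eq (width [(0,1)] [0, q-p]) (width [(0,1)] [0, t-p])"
    unfolding is_minimal_instance_def by blast
  hence "q - p \<le> t - p" by (auto simp: width_def)
  with t show False by linarith
qed

lemma distinct_perm: "is_perm N x \<Longrightarrow> distinct x"
  unfolding is_perm_def by (metis card_atLeastAtMost card_distinct diff_Suc_1)

lemma bount:
  assumes "a \<noteq> b"
  shows "bountiful [a,b] [(0,1)]"
  unfolding bountiful_def
proof (intro allI impI)
  fix N x P t
  assume perm: "is_perm N x" and lm: "is_locally_minimal [a,b] [(0,1)] x P"
    and t1: "hd P < t" and t2: "t < last P" and tn: "t \<notin> set P"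
  from lm obtain p q where P: "P = [p,q]" unfolding is_locally_minimal_def
    using inst_len by blast
  from lm P have i: "is_instance [a,b] x [p,q]" unfolding is_locally_minimal_def by simp
  hence pq: "q < length x" "p < q" by (simp_all add: inst2)
  have tl: "t < length x" using t2 pq P by simp
  have d: "x!t \<noteq> x!p" "x!t \<noteq> x!q"
    using distinct_perm[OF perm] t1 t2 P pq tl by (auto simp: nth_eq_iff_index_eq)
  have k: "\<not> ((x!p < x!t \<longleftrightarrow> a < b) \<and> (x!t < x!p \<longleftrightarrow> b < a))"
    using key[OF lm[unfolded P]] t1 t2 P by simp
  have ab: "(x!p < x!q \<longleftrightarrow> a < b) \<and> (x!q < x!p \<longleftrightarrow> b < a)" using i by (simp add: inst2)
  show "(\<forall>j<length P. P ! j < t \<longrightarrow> x ! t < x ! (P ! j)) \<or>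
        (\<forall>j<length P. t < P ! j \<longrightarrow> x ! (P ! j) < x ! t)"
  proof (cases "a < b")
    case True
    hence "x!t < x!p" using k d(1) by (metis not_less_iff_gr_or_eq)
    hence "\<forall>j<length P. P ! j < t \<longrightarrow> x ! t < x ! (P ! j)" using P t2 by (simp add: all2)
    thus ?thesis by blast
  next
    case False
    have "x!p < x!t" using k d(1) False assms by (metis not_less_iff_gr_or_eq)
    moreover have "x!q < x!p" using ab False assms d pq by (metis not_less_iff_gr_or_eq)
    ultimately have "\<forall>j<length P. t < P ! j \<longrightarrow> x ! (P ! j) < x ! t" using P t1 by (simp add: all2)
    thus ?thesis by blast
  qed
qed

theorem mainTheorem14:
  shows "admits_bountiful_width_system [1, 2] \<and> admits_bountiful_width_system [2, 1]"
  unfolding admits_bountiful_width_system_def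
proof
  show "\<exists>ws. is_width_system (length [1::nat, 2]) ws \<and> bountiful [1, 2] ws"
    using bount[of 1 2] by (intro exI[of _ "[(0,1)]"]) (simp add: is_width_system_def)
  show "\<exists>ws. is_width_system (length [2::nat, 1]) ws \<and> bountiful [2, 1] ws"
    using bount[of 2 1] by (intro exI[of _ "[(0,1)]"]) (simp add: is_width_system_def)
qed

end
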